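(* For any distribution $P_{\bar Z\bar Y}$ on $\widehat{\mathcal S}\times\widehat{\mathcal X}$, any positive integer $M$ and any $\gamma>0$, there exists an $(M,d_s,d_x,\epsilon)$ code with \[\epsilon\le\mathbb P\big[g_{\bar Z\bar Y}(X,U)\ge\log\gamma\big]+e^{-M/\gamma},\] where $U$ is uniform on $[0,1]$ and independent of $X\sim P_X$, and \[g_{\bar Z\bar Y}(x,t)=\inf\big\{D(P_{ZY}\Vert P_{\bar Z\bar Y}):\ P_{ZY}\text{ a distribution on }\widehat{\mathcal S}\times\widehat{\mathcal X}\text{ with }\pi(x,Z,Y)\le t\text{ almost surely}\big\},\] with $\pi(x,z,y)=\mathbb P[\mathsf d_s(S,z)>d_s\text{ or }\mathsf d_x(x,y)>d_x\mid X=x]$, $S\sim P_{S|X=x}$.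
   Context: Let $\mathcal S,\mathcal X,\widehat{\mathcal S},\widehat{\mathcal X}$ be finite sets, $P_{SX}$ a distribution on $\mathcal S\times\mathcal X$, and $\mathsf d_s:\mathcal S\times\widehat{\mathcal S}\to[0,\infty)$, $\mathsf d_x:\mathcal X\times\widehat{\mathcal X}\to[0,\infty)$ distortion measures; fix $d_s,d_x\ge0$. An $(M,d_s,d_x,\epsilon)$ code is a random encoder $P_{U|X}:\mathcal X\to\{1,\dots,M\}$ and a random decoder $P_{ZY|U}:\{1,\dots,M\}\to\widehat{\mathcal S}\times\widehat{\mathcal X}$ (so $S-X-U-(Z,Y)$) such that $\mathbb P[\mathsf d_s(S,Z)>d_s\text{ or }\mathsf d_x(X,Y)>d_x]\le\epsilon$. $D(\cdot\Vert\cdot)$ is relative entropy; $\log$ and $\exp$ are to a common base. *)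

theory Defs
  imports "HOL-Probability.Probability"
begin

definition rel_ent :: "'a::finite pmf \<Rightarrow> 'a pmf \<Rightarrow> ereal" where
  "rel_ent P Q =
     (if \<forall>a. pmf Q a = 0 \<longrightarrow> pmf P a = 0
      then ereal (\<Sum>a\<in>UNIV. pmf P a * ln (pmf P a / pmf Q a))
      else \<infinity>)"

definition code_joint ::
  "('s \<times> 'x) pmf \<Rightarrow> ('x \<Rightarrow> nat pmf) \<Rightarrow> (nat \<Rightarrow> ('z \<times> 'y) pmf) \<Rightarrow> ('s \<times> 'x \<times> 'z \<times> 'y) pmf" where
  "code_joint PSX enc dec =
     bind_pmf PSX (\<lambda>(s, x). bind_pmf (enc x) (\<lambda>u.
       map_pmf (\<lambda>(z, y). (s, x, z, y)) (dec u)))"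

definition excess_prob ::
  "('s \<times> 'x) pmf \<Rightarrow> ('s \<Rightarrow> 'z \<Rightarrow> real) \<Rightarrow> ('x \<Rightarrow> 'y \<Rightarrow> real) \<Rightarrow> real \<Rightarrow> real
   \<Rightarrow> ('x \<Rightarrow> nat pmf) \<Rightarrow> (nat \<Rightarrow> ('z \<times> 'y) pmf) \<Rightarrow> real" where
  "excess_prob PSX dS dX ds dx enc dec =
     measure_pmf.prob (code_joint PSX enc dec)
       {(s, x, z, y). dS s z > ds \<or> dX x y > dx}"

definition is_code ::
  "('s \<times> 'x) pmf \<Rightarrow> ('s \<Rightarrow> 'z \<Rightarrow> real) \<Rightarrow> ('x \<Rightarrow> 'y \<Rightarrow> real) \<Rightarrow> nat \<Rightarrow> real \<Rightarrow> real \<Rightarrow> real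
   \<Rightarrow> ('x \<Rightarrow> nat pmf) \<Rightarrow> (nat \<Rightarrow> ('z \<times> 'y) pmf) \<Rightarrow> bool" where
  "is_code PSX dS dX M ds dx eps enc dec \<longleftrightarrow>
     (\<forall>x. set_pmf (enc x) \<subseteq> {1..M}) \<and> excess_prob PSX dS dX ds dx enc dec \<le> eps"

definition pi_fn ::
  "('s \<times> 'x) pmf \<Rightarrow> ('s \<Rightarrow> 'z \<Rightarrow> real) \<Rightarrow> ('x \<Rightarrow> 'y \<Rightarrow> real) \<Rightarrow> real \<Rightarrow> real
   \<Rightarrow> 'x \<Rightarrow> 'z \<Rightarrow> 'y \<Rightarrow> real" where
  "pi_fn PSX dS dX ds dx x z y =
     measure_pmf.prob (cond_pmf PSX {p. snd p = x}) {p. dS (fst p) z > ds \<or> dX x y > dx}"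

definition g_fn ::
  "('s \<times> 'x) pmf \<Rightarrow> ('s \<Rightarrow> 'z \<Rightarrow> real) \<Rightarrow> ('x \<Rightarrow> 'y \<Rightarrow> real) \<Rightarrow> real \<Rightarrow> real
   \<Rightarrow> ('z::finite \<times> 'y::finite) pmf \<Rightarrow> 'x \<Rightarrow> real \<Rightarrow> ereal" where
  "g_fn PSX dS dX ds dx Qbar x t =
     Inf {rel_ent P Qbar | P. \<forall>zy\<in>set_pmf P. pi_fn PSX dS dX ds dx x (fst zy) (snd zy) \<le> t}"

end

theory Submission imports Defs begin

primrec Hf :: "('c \<Rightarrow> real) \<Rightarrow> 'c pmf \<Rightarrow> real \<Rightarrow> nat \<Rightarrow> real" where
  "Hf f Q a 0 = a"
| "Hf f Q a (Suc k) = measure_pmf.expectation Q (\<lambda>c. Hf f Q (min a (f c)) k)"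

lemma integrable_fin[simp]: "integrable (measure_pmf (Q::'c::finite pmf)) (g :: 'c \<Rightarrow> real)"
  by (rule integrable_measure_pmf_finite) simp

lemma exists_le_mean:
  fixes Q :: "'c::finite pmf" and F :: "'c \<Rightarrow> real"
  shows "\<exists>c\<in>set_pmf Q. F c \<le> measure_pmf.expectation Q F"
proof -
  have fin: "finite (set_pmf Q)" by simp
  have ne: "set_pmf Q \<noteq> {}" by (simp add: set_pmf_not_empty)
  define m where "m = Min (F ` set_pmf Q)"
  have "m \<in> F ` set_pmf Q" unfolding m_def using fin ne by (intro Min_in) auto
  then obtain c where c: "c \<in> set_pmf Q" "F c = m" by auto
  have le: "\<And>a. a \<in> set_pmf Q \<Longrightarrow> F c \<le> F a" unfolding c(2) m_def using fin by auto
  have "measure_pmf.expectation Q (\<lambda>_. F c) \<le> measure_pmf.expectation Q F"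
    by (rule integral_mono_AE) (auto simp: AE_measure_pmf_iff le)
  then show ?thesis using c(1) by auto
qed

lemma Hf_le_a: "Hf f (Q::'c::finite pmf) a k \<le> a"
proof (induction k arbitrary: a)
  case 0 then show ?case by simp
next
  case (Suc k)
  have "Hf f Q a (Suc k) \<le> measure_pmf.expectation Q (\<lambda>c. a)"
    unfolding Hf.simps
    by (rule integral_mono) (auto intro: order_trans[OF Suc.IH])
  then show ?case by simp
qed

lemma Hf_bound:
  fixes Q :: "'c::finite pmf"
  assumes s0: "s \<ge> 0"
  shows "Hf f Q a k \<le> s + (1 - measure_pmf.prob Q {c. f c \<le> s}) ^ k * a"
proof (induction k arbitrary: a)
  case 0 then show ?case using s0 by simp
next
  case (Suc k)
  define q where "q = measure_pmf.prob Q {c. f c \<le> s}"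
  have q1: "1 - q \<ge> 0" unfolding q_def by simp
  have "Hf f Q a (Suc k) \<le> measure_pmf.expectation Q
          (\<lambda>c. s + (1 - q) ^ k * a * indicator {c. \<not> f c \<le> s} c)"
    unfolding Hf.simps
  proof (rule integral_mono)
    fix c
    show "Hf f Q (min a (f c)) k \<le> s + (1 - q) ^ k * a * indicator {c. \<not> f c \<le> s} c"
    proof (cases "f c \<le> s")
      case True
      then show ?thesis using Hf_le_a[of f Q "min a (f c)" k] by simp
    next
      case False
      have "(1 - q) ^ k * min a (f c) \<le> (1 - q) ^ k * a"
        by (rule mult_left_mono) (use q1 in auto)
      then show ?thesis using Suc.IH[of "min a (f c)"] False unfolding q_def by simp
    qed
  qed auto
  also have "\<dots> = s + (1 - q) ^ k * a * measure_pmf.prob Q {c. \<not> f c \<le> s}"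
    by simp
  also have "measure_pmf.prob Q {c. \<not> f c \<le> s} = 1 - q"
  proof -
    have "{c. \<not> f c \<le> s} = UNIV - {c. f c \<le> s}" by auto
    then show ?thesis unfolding q_def using measure_pmf.prob_compl[of "{c. f c \<le> s}" Q] by simp
  qed
  finally show ?case unfolding q_def by (simp add: algebra_simps)
qed

lemma codebook:
  fixes Q :: "'c::finite pmf" and w :: "'x::finite \<Rightarrow> real" and h :: "'x \<Rightarrow> 'c \<Rightarrow> real"
  shows "\<exists>cs. length cs = k \<and> (\<Sum>x\<in>UNIV. w x * foldl (\<lambda>a c. min a (h x c)) (m x) cs)
            \<le> (\<Sum>x\<in>UNIV. w x * Hf (h x) Q (m x) k)"
proof (induction k arbitrary: m)
  case 0 then show ?case by simp
next
  case (Suc k)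
  define F where "F c = (\<Sum>x\<in>UNIV. w x * Hf (h x) Q (min (m x) (h x c)) k)" for c
  have eq: "(\<Sum>x\<in>UNIV. w x * Hf (h x) Q (m x) (Suc k)) = measure_pmf.expectation Q F"
    unfolding F_def Hf.simps by simp
  obtain c where c: "F c \<le> measure_pmf.expectation Q F" using exists_le_mean by blast
  obtain cs where cs: "length cs = k" "(\<Sum>x\<in>UNIV. w x * foldl (\<lambda>a c. min a (h x c)) (min (m x) (h x c)) cs) \<le> F c"
    using Suc.IH[of "\<lambda>x. min (m x) (h x c)"] unfolding F_def by blast
  show ?case
    by (rule exI[of _ "c # cs"]) (use cs c eq in auto)
qed

lemma foldl_min_in: "foldl (\<lambda>a c. min a (f c)) a cs \<in> insert a (f ` set cs)"
proof (induction cs arbitrary: a)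
  case Nil then show ?case by simp
next
  case (Cons c cs)
  show ?case using Cons.IH[of "min a (f c)"] by (auto simp: min_def split: if_splits)
qed

lemma foldl_min_attained:
  fixes f :: "'c \<Rightarrow> real"
  assumes "cs \<noteq> []" "\<forall>c. f c \<le> 1"
  shows "\<exists>i<length cs. f (cs ! i) \<le> foldl (\<lambda>a c. min a (f c)) 1 cs"
proof -
  define v where "v = foldl (\<lambda>a c. min a (f c)) 1 cs"
  have "v \<in> insert 1 (f ` set cs)" unfolding v_def by (rule foldl_min_in)
  then have "\<exists>c\<in>set cs. f c \<le> v"
  proof
    assume "v = 1"
    then show ?thesis using assms by (cases cs) auto
  next
    assume "v \<in> f ` set cs"
    then obtain c where "c \<in> set cs" "v = f c" by blast
    then show ?thesis by (intro bexI[of _ c]) auto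
  qed
  then show ?thesis unfolding v_def by (auto simp: in_set_conv_nth)
qed

lemma ln_ineq:
  fixes p q r :: real
  assumes "p > 0" "q > 0" "r > 0"
  shows "p * ln (p / q) \<ge> - p * ln r + p - q / r"
proof -
  have "ln (q / (p * r)) \<le> q / (p * r) - 1" using assms by (intro ln_le_minus_one) auto
  then have "p * ln (q / (p * r)) \<le> p * (q / (p * r) - 1)" using assms by simp
  moreover have "p * ln (q / (p * r)) = p * ln q - p * ln p - p * ln r" using assms by (simp add: ln_div ln_mult algebra_simps)
  moreover have "p * ln (p / q) = p * ln p - p * ln q" using assms by (simp add: ln_div algebra_simps)
  moreover have "p * (q / (p * r) - 1) = q / r - p" using assms by (simp add: field_simps)
  ultimately show ?thesis by linarith
qed

lemma gibbs:
  fixes P Q :: "'a::finite pmf"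
  assumes sub: "set_pmf P \<subseteq> A" and lt: "rel_ent P Q < ereal (ln \<gamma>)" and g0: "\<gamma> > 0"
  shows "measure_pmf.prob Q A > 1 / \<gamma>"
proof -
  have ac: "\<forall>a. pmf Q a = 0 \<longrightarrow> pmf P a = 0"
    using lt unfolding rel_ent_def by (auto split: if_splits)
  define D where "D = (\<Sum>a\<in>UNIV. pmf P a * ln (pmf P a / pmf Q a))"
  have DL: "D < ln \<gamma>" using lt ac unfolding rel_ent_def D_def by simp
  define qA where "qA = measure_pmf.prob Q A"
  obtain a0 where a0: "a0 \<in> set_pmf P" using set_pmf_not_empty[of P] by blast
  have "pmf Q a0 > 0" using ac a0 by (metis pmf_nonneg set_pmf_iff less_eq_real_def)
  moreover have "pmf Q a0 \<le> qA" unfolding qA_def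
    using measure_pmf.finite_measure_mono[of "{a0}" A Q] a0 sub by (auto simp: measure_pmf_single)
  ultimately have qA0: "qA > 0" by simp
  have pw: "pmf P a * ln (pmf P a / pmf Q a) \<ge> - pmf P a * ln qA + pmf P a - (if a \<in> A then pmf Q a / qA else 0)" for a
  proof (cases "pmf P a > 0")
    case True
    then have "a \<in> A" using sub by (auto simp: set_pmf_iff)
    moreover have "pmf Q a > 0" using True ac by (metis pmf_nonneg less_eq_real_def less_irrefl)
    ultimately show ?thesis using ln_ineq[OF True _ qA0] by simp
  next
    case False
    then have "pmf P a = 0" by (simp add: pmf_nonneg order_less_le)
    then show ?thesis using qA0 by (auto intro: divide_nonneg_pos)
  qed
  have S1: "(\<Sum>a\<in>UNIV. - pmf P a * ln qA + pmf P a - (if a \<in> A then pmf Q a / qA else 0)) \<le> D"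
    unfolding D_def by (rule sum_mono) (rule pw)
  have S2: "(\<Sum>a\<in>UNIV. - pmf P a * ln qA + pmf P a - (if a \<in> A then pmf Q a / qA else 0))
     = - ln qA * (\<Sum>a\<in>UNIV. pmf P a) + (\<Sum>a\<in>UNIV. pmf P a) - (\<Sum>a\<in>A. pmf Q a) / qA"
    by (simp add: sum.distrib sum_subtractf sum_distrib_left sum_divide_distrib[symmetric] sum.If_cases algebra_simps sum_negf)
  have S3: "(\<Sum>a\<in>UNIV. pmf P a) = 1" by (simp add: sum_pmf_eq_1)
  have S4: "(\<Sum>a\<in>A. pmf Q a) = qA" unfolding qA_def by (simp add: measure_measure_pmf_finite)
  have "- ln qA \<le> D" using S1 S2 S3 S4 qA0 by simp
  then have "- ln qA < ln \<gamma>" using DL by simp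
  then have "ln (1 / \<gamma>) < ln qA" using g0 by (simp add: ln_div)
  then show ?thesis unfolding qA_def[symmetric] using qA0 g0 by simp
qed

lemma per_x:
  fixes f :: "'c::finite \<Rightarrow> real" and Q :: "'c pmf" and g :: "real \<Rightarrow> ereal"
  assumes f0: "\<forall>c. 0 \<le> f c" and f1: "\<forall>c. f c \<le> 1"
    and anti: "\<forall>t t'. t \<le> t' \<longrightarrow> g t' \<le> g t"
    and key: "\<forall>t. g t < c0 \<longrightarrow> measure_pmf.prob Q {c. f c \<le> t} > 1 / \<gamma>"
    and g0: "\<gamma> > 0"
  shows "Hf f Q 1 M \<le> measure lborel {t\<in>{0..1}. c0 \<le> g t} + exp (- real M / \<gamma>)"
proof -
  define B where "B = {t\<in>{0..1::real}. c0 \<le> g t}"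
  have Bint: "is_interval B" unfolding is_interval_1 B_def
  proof (intro ballI allI impI)
    fix a b x assume "a \<in> {t \<in> {0..1}. c0 \<le> g t}" "b \<in> {t \<in> {0..1}. c0 \<le> g t}" "a \<le> x \<and> x \<le> b"
    then show "x \<in> {t \<in> {0..1}. c0 \<le> g t}" using anti by (auto intro: order_trans)
  qed
  have Bsets: "B \<in> sets lborel" using real_interval_borel_measurable[OF Bint] by simp
  have Bsub: "B \<subseteq> {0..1}" unfolding B_def by auto
  have Bfm: "B \<in> fmeasurable lborel"
    by (rule fmeasurableI2[OF _ Bsub]) (use Bsets in \<open>auto simp: fmeasurable_def\<close>)
  have e0: "exp (- real M / \<gamma>) \<ge> 0" by simp
  define q where "q s = measure_pmf.prob Q {c. f c \<le> s}" for s
  define V where "V = {s\<in>{0..1::real}. q s > 1 / \<gamma>}"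
  show ?thesis
  proof (cases "V = {}")
    case True
    have "B = {0..1}"
    proof
      show "{0..1} \<subseteq> B"
      proof
        fix t :: real assume t: "t \<in> {0..1}"
        show "t \<in> B"
        proof (rule ccontr)
          assume "t \<notin> B"
          then have "g t < c0" using t unfolding B_def by auto
          then have "t \<in> V" using key t unfolding V_def q_def by auto
          then show False using True by auto
        qed
      qed
    qed (rule Bsub)
    then have "measure lborel B = 1" by simp
    moreover have "Hf f Q 1 M \<le> 1" by (rule Hf_le_a)
    ultimately show ?thesis using e0 unfolding B_def by linarith
  next
    case False
    define R where "R = V \<inter> range f"
    have finR: "finite R" unfolding R_def by simp
    have low: "\<exists>s'\<in>R. s' \<le> s" if sV: "s \<in> V" for s
    proof -
      have qs: "q s > 1 / \<gamma>" using sV unfolding V_def by auto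
      have ne: "{c. f c \<le> s} \<noteq> {}"
      proof
        assume "{c. f c \<le> s} = {}"
        then have "q s = 0" unfolding q_def by simp
        then show False using qs g0 by simp
      qed
      define s' where "s' = Max (f ` {c. f c \<le> s})"
      have s'in: "s' \<in> f ` {c. f c \<le> s}" unfolding s'_def using ne by (intro Max_in) auto
      have s'le: "s' \<le> s" using s'in by auto
      have eqset: "{c. f c \<le> s'} = {c. f c \<le> s}"
      proof
        show "{c. f c \<le> s'} \<subseteq> {c. f c \<le> s}" using s'le by auto
        show "{c. f c \<le> s} \<subseteq> {c. f c \<le> s'}" unfolding s'_def by (auto intro: Max_ge)
      qed
      have "s' \<in> V" using sV s'le s'in f0 eqset unfolding V_def q_def by auto
      then show ?thesis using s'in s'le unfolding R_def by auto
    qed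
    obtain s0 where "s0 \<in> V" using False by auto
    then obtain s1 where "s1 \<in> R" using low by blast
    then have neR: "R \<noteq> {}" by auto
    define v where "v = Min R"
    have vR: "v \<in> R" unfolding v_def using finR neR by (rule Min_in)
    have vmin: "v \<le> s" if "s \<in> V" for s
      using low[OF that] finR unfolding v_def by (meson Min_le order_trans)
    have vV: "v \<in> V" using vR unfolding R_def by auto
    then have v01: "0 \<le> v" "v \<le> 1" and qv: "q v > 1 / \<gamma>" unfolding V_def by auto
    have sub: "{0..<v} \<subseteq> B"
    proof
      fix t assume t: "t \<in> {0..<v}"
      show "t \<in> B"
      proof (rule ccontr)
        assume "t \<notin> B"
        then have "g t < c0" using t v01 unfolding B_def by auto
        then have "t \<in> V" using key t v01 unfolding V_def q_def by auto
        then show False using vmin t by fastforce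
      qed
    qed
    have "v \<le> measure lborel B"
      using measure_mono_fmeasurable[OF sub _ Bfm] v01 by simp
    moreover have "Hf f Q 1 M \<le> v + (1 - q v) ^ M * 1"
      unfolding q_def by (rule Hf_bound) (use v01 in auto)
    moreover have "(1 - q v) ^ M \<le> exp (- real M / \<gamma>)"
    proof -
      have q1: "0 \<le> 1 - q v" unfolding q_def by simp
      have "(1 - q v) ^ M \<le> exp (- q v) ^ M"
        by (rule power_mono) (use q1 exp_ge_add_one_self[of "- q v"] in auto)
      also have "\<dots> = exp (real M * (- q v))" by (rule exp_of_nat_mult[symmetric])
      also have "\<dots> \<le> exp (- real M / \<gamma>)"
      proof -
        have "real M * (1 / \<gamma>) \<le> real M * q v" using qv by (intro mult_left_mono) auto
        then show ?thesis by simp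
      qed
      finally show ?thesis .
    qed
    ultimately show ?thesis unfolding B_def by linarith
  qed
qed

lemma disint_x:
  fixes PSX :: "('s::finite \<times> 'x::finite) pmf"
  shows "pmf (map_pmf snd PSX) x * measure_pmf.prob (cond_pmf PSX {p. snd p = x}) S
         = measure_pmf.prob PSX (S \<inter> {p. snd p = x})"
proof -
  define m where "m = measure_pmf.prob PSX {p. snd p = x}"
  have pm: "pmf (map_pmf snd PSX) x = m" unfolding m_def pmf_map by (simp add: vimage_def)
  show ?thesis
  proof (cases "m = 0")
    case True
    have "measure_pmf.prob PSX (S \<inter> {p. snd p = x}) \<le> m"
      unfolding m_def by (rule measure_pmf.finite_measure_mono) auto
    then show ?thesis using pm True by (simp add: measure_nonneg order_antisym)
  next
    case False
    have ne: "set_pmf PSX \<inter> {p. snd p = x} \<noteq> {}"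
    proof
      assume "set_pmf PSX \<inter> {p. snd p = x} = {}"
      then have "m = 0" unfolding m_def by (simp add: measure_pmf_zero_iff)
      then show False using False by simp
    qed
    have "measure_pmf.prob (cond_pmf PSX {p. snd p = x}) S
        = (\<Sum>p\<in>S. pmf (cond_pmf PSX {p. snd p = x}) p)" by (simp add: measure_measure_pmf_finite)
    also have "\<dots> = (\<Sum>p\<in>S. if snd p = x then pmf PSX p / m else 0)"
      unfolding pmf_cond[OF ne] m_def by simp
    also have "\<dots> = (\<Sum>p\<in>S \<inter> {p. snd p = x}. pmf PSX p) / m"
      by (simp add: sum.If_cases sum_divide_distrib)
    also have "\<dots> = measure_pmf.prob PSX (S \<inter> {p. snd p = x}) / m"
      by (simp add: measure_measure_pmf_finite)
    finally show ?thesis using pm False by simp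
  qed
qed

lemma disint:
  fixes PSX :: "('s::finite \<times> 'x::finite) pmf"
  shows "measure_pmf.prob PSX {p. R (fst p) (snd p)}
    = (\<Sum>x\<in>UNIV. pmf (map_pmf snd PSX) x * measure_pmf.prob (cond_pmf PSX {p. snd p = x}) {p. R (fst p) x})"
proof -
  have "measure_pmf.prob PSX {p. R (fst p) (snd p)} = (\<Sum>p\<in>{p. R (fst p) (snd p)}. pmf PSX p)"
    by (simp add: measure_measure_pmf_finite)
  also have "\<dots> = (\<Sum>x\<in>UNIV. \<Sum>p\<in>{p \<in> {p. R (fst p) (snd p)}. snd p = x}. pmf PSX p)"
    by (rule sum.group[symmetric]) auto
  also have "\<dots> = (\<Sum>x\<in>UNIV. measure_pmf.prob PSX ({p. R (fst p) x} \<inter> {p. snd p = x}))"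
  proof (rule sum.cong)
    fix x
    have "{p \<in> {p. R (fst p) (snd p)}. snd p = x} = {p. R (fst p) x} \<inter> {p. snd p = x}" by auto
    then show "(\<Sum>p\<in>{p \<in> {p. R (fst p) (snd p)}. snd p = x}. pmf PSX p) =
       measure_pmf.prob PSX ({p. R (fst p) x} \<inter> {p. snd p = x})"
      by (simp add: measure_measure_pmf_finite)
  qed simp
  also have "\<dots> = (\<Sum>x\<in>UNIV. pmf (map_pmf snd PSX) x * measure_pmf.prob (cond_pmf PSX {p. snd p = x}) {p. R (fst p) x})"
    by (simp add: disint_x)
  finally show ?thesis .
qed

lemma excess_eq:
  fixes PSX :: "('s::finite \<times> 'x::finite) pmf"
  shows "excess_prob PSX dS dX ds dx (\<lambda>x. return_pmf (e x)) (\<lambda>u. return_pmf (cb u))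
    = (\<Sum>x\<in>UNIV. pmf (map_pmf snd PSX) x * pi_fn PSX dS dX ds dx x (fst (cb (e x))) (snd (cb (e x))))"
proof -
  have cj: "code_joint PSX (\<lambda>x. return_pmf (e x)) (\<lambda>u. return_pmf (cb u))
     = map_pmf (\<lambda>p. (fst p, snd p, cb (e (snd p)))) PSX"
    unfolding code_joint_def map_pmf_def
    by (simp add: bind_return_pmf split_beta case_prod_beta')
  have "excess_prob PSX dS dX ds dx (\<lambda>x. return_pmf (e x)) (\<lambda>u. return_pmf (cb u))
     = measure_pmf.prob PSX {p. dS (fst p) (fst (cb (e (snd p)))) > ds \<or> dX (snd p) (snd (cb (e (snd p)))) > dx}"
    unfolding excess_prob_def cj by (simp add: vimage_def split_beta)
  also have "\<dots> = (\<Sum>x\<in>UNIV. pmf (map_pmf snd PSX) x * pi_fn PSX dS dX ds dx x (fst (cb (e x))) (snd (cb (e x))))"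
    unfolding pi_fn_def by (rule disint[where R = "\<lambda>s x. dS s (fst (cb (e x))) > ds \<or> dX x (snd (cb (e x))) > dx"])
  finally show ?thesis .
qed

theorem theorem2:
  fixes PSX :: "('s::finite \<times> 'x::finite) pmf"
    and dS :: "'s \<Rightarrow> 'z::finite \<Rightarrow> real"
    and dX :: "'x \<Rightarrow> 'y::finite \<Rightarrow> real"
    and ds dx :: real
    and Qbar :: "('z \<times> 'y) pmf"
    and M :: nat and \<gamma> :: real
  assumes "\<forall>s z. dS s z \<ge> 0" and "\<forall>x y. dX x y \<ge> 0"
    and "ds \<ge> 0" and "dx \<ge> 0"
    and "M > 0" and "\<gamma> > 0"
  shows "\<exists>enc dec. is_code PSX dS dX M ds dx
           ((\<Sum>x\<in>UNIV. pmf (map_pmf snd PSX) x *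
               measure lborel {t\<in>{0..1}. g_fn PSX dS dX ds dx Qbar x t \<ge> ereal (ln \<gamma>)})
            + exp (- real M / \<gamma>)) enc dec"
proof -
  note M0 = \<open>M > 0\<close> and g0 = \<open>\<gamma> > 0\<close>
  define w where "w x = pmf (map_pmf snd PSX) x" for x
  define h where "h x c = pi_fn PSX dS dX ds dx x (fst c) (snd c)" for x and c :: "'z \<times> 'y"
  define G where "G x = g_fn PSX dS dX ds dx Qbar x" for x
  define E where "E = exp (- real M / \<gamma>)"
  define L where "L x = measure lborel {t\<in>{0..1}. ereal (ln \<gamma>) \<le> G x t}" for x
  have h0: "0 \<le> h x c" for x c unfolding h_def pi_fn_def by simp
  have h1: "h x c \<le> 1" for x c unfolding h_def pi_fn_def by simp
  have w0: "0 \<le> w x" for x unfolding w_def by simp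
  have wsum: "(\<Sum>x\<in>UNIV. w x) = 1" unfolding w_def by (simp add: sum_pmf_eq_1)
  obtain cs where cs: "length cs = M"
    "(\<Sum>x\<in>UNIV. w x * foldl (\<lambda>a c. min a (h x c)) 1 cs) \<le> (\<Sum>x\<in>UNIV. w x * Hf (h x) Qbar 1 M)"
    using codebook[of M w h "\<lambda>_. 1" Qbar] by auto
  have csne: "cs \<noteq> []" using cs(1) M0 by auto
  define F where "F x = foldl (\<lambda>a c. min a (h x c)) 1 cs" for x
  have att: "\<exists>i. i < length cs \<and> h x (cs ! i) \<le> F x" for x
    using foldl_min_attained[OF csne, of "h x"] h1 unfolding F_def by auto
  define e where "e x = Suc (SOME i. i < length cs \<and> h x (cs ! i) \<le> F x)" for x
  define cb where "cb u = cs ! (u - 1)" for u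
  have eprop: "e x \<in> {1..M} \<and> h x (cb (e x)) \<le> F x" for x
  proof -
    have "(SOME i. i < length cs \<and> h x (cs ! i) \<le> F x) < length cs \<and>
          h x (cs ! (SOME i. i < length cs \<and> h x (cs ! i) \<le> F x)) \<le> F x"
      using someI_ex[OF att[of x]] .
    then show ?thesis unfolding e_def cb_def using cs(1) by auto
  qed
  have anti: "\<forall>t t'. t \<le> t' \<longrightarrow> G x t' \<le> G x t" for x
    unfolding G_def g_fn_def by (auto intro!: Inf_superset_mono, blast intro: order_trans)
  have key: "\<forall>t. G x t < ereal (ln \<gamma>) \<longrightarrow> measure_pmf.prob Qbar {c. h x c \<le> t} > 1 / \<gamma>" for x
  proof (intro allI impI)
    fix t assume "G x t < ereal (ln \<gamma>)"
    then obtain P where P: "\<forall>zy\<in>set_pmf P. pi_fn PSX dS dX ds dx x (fst zy) (snd zy) \<le> t"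
      "rel_ent P Qbar < ereal (ln \<gamma>)"
      unfolding G_def g_fn_def by (auto simp: Inf_less_iff)
    have "set_pmf P \<subseteq> {c. h x c \<le> t}" using P(1) unfolding h_def by auto
    then show "measure_pmf.prob Qbar {c. h x c \<le> t} > 1 / \<gamma>" using gibbs P(2) g0 by blast
  qed
  have px: "Hf (h x) Qbar 1 M \<le> L x + E" for x
    unfolding L_def E_def
    by (rule per_x) (use h0 h1 anti key g0 in auto)
  have "excess_prob PSX dS dX ds dx (\<lambda>x. return_pmf (e x)) (\<lambda>u. return_pmf (cb u))
        = (\<Sum>x\<in>UNIV. w x * h x (cb (e x)))"
    unfolding excess_eq w_def h_def ..
  also have "\<dots> \<le> (\<Sum>x\<in>UNIV. w x * F x)"
    by (rule sum_mono) (use eprop w0 in \<open>auto intro: mult_left_mono\<close>)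
  also have "\<dots> \<le> (\<Sum>x\<in>UNIV. w x * Hf (h x) Qbar 1 M)" using cs(2) unfolding F_def .
  also have "\<dots> \<le> (\<Sum>x\<in>UNIV. w x * (L x + E))"
    by (rule sum_mono) (use px w0 in \<open>auto intro: mult_left_mono\<close>)
  also have "\<dots> = (\<Sum>x\<in>UNIV. w x * L x) + E"
    by (simp add: distrib_left sum.distrib sum_distrib_right[symmetric] wsum)
  finally have ex: "excess_prob PSX dS dX ds dx (\<lambda>x. return_pmf (e x)) (\<lambda>u. return_pmf (cb u))
       \<le> (\<Sum>x\<in>UNIV. w x * L x) + E" .
  show ?thesis
    by (rule exI[of _ "\<lambda>x. return_pmf (e x)"], rule exI[of _ "\<lambda>u. return_pmf (cb u)"])
       (use ex eprop in \<open>auto simp: is_code_def w_def L_def G_def E_def\<close>)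
qed

end
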